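(* Let $Q\in\mathcal{P}$ have balance coefficient $\beta$ (so $\beta\ge \tfrac12$). Then for every $0<v<1$, $$L(v)\;\le\; D^*(v,Q)\;\le\; \mathrm{KL}_2\!\left(\beta-\tfrac{v}{2},\,\beta\right).$$
   Context: Let $(\Omega,\mathcal{F},\mu)$ be a finite or $\sigma$-finite measure space, and let $\mathcal{P}$ be the set of probability measures on $(\Omega,\mathcal{F})$ absolutely continuous with respect to $\mu$. For $P,Q\in\mathcal{P}$ the lower-case letters $p,q$ denote their densities with respect to $\mu$. The Kullback–Leibler divergence is $D(P\Vert Q)=\int \ln\frac{dP}{dQ}\,dP$ if $P\ll Q$, and $D(P\Vert Q)=+\infty$ otherwise. The total variation distance is $V(P,Q)=\int_\Omega |p-q|\,d\mu$. For $v>0$ and $Q\in\mathcal{P}$ define $D^*(v,Q)=\inf\{D(P\Vert Q): P\in\mathcal{P},\ V(P,Q)\ge v\}$, with $\inf\emptyset=+\infty$. For $p,q\in[0,1]$ let $\mathrm{KL}_2(p,q)=p\ln\frac{p}{q}+(1-p)\ln\frac{1-p}{1-q}$, with the conventions $0\ln(0/x)=0$ and $a\ln(a/0)=+\infty$ for $a>0$. In particular $\mathrm{KL}_2(1-\tfrac v2,1)=+\infty$. Vajda's function is $L(v)=\inf\{D(P\Vert Q): V(P,Q)=v\}$, where the infimum is over all pairs of probability measures $P,Q$ on a common measurable space. The range of $Q$ is $\mathcal{R}(Q)=\{Q(A):A\in\mathcal{F}\}$. The balance coefficient of $Q$ is $\beta=\inf\{x\in\mathcal{R}(Q): x\ge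 \tfrac12\}$. *)

theory Defs
  imports "HOL-Probability.Probability"
begin

definition prob_set :: "'a measure \<Rightarrow> 'a measure set" where
  "prob_set \<mu> = {P. prob_space P \<and> sets P = sets \<mu> \<and> absolutely_continuous \<mu> P}"

definition tv_dist :: "'a measure \<Rightarrow> 'a measure \<Rightarrow> 'a measure \<Rightarrow> real" where
  "tv_dist \<nu> P Q = (\<integral>x. \<bar>enn2real (RN_deriv \<nu> P x) - enn2real (RN_deriv \<nu> Q x)\<bar> \<partial>\<nu>)"

text \<open>Kullback-Leibler divergence D(P||Q): the integral of ln(dP/dQ) w.r.t. P if P << Q,
  and +infinity otherwise.  (The negative part of the integrand is always P-integrable,
  so non-integrability means the integral is +infinity.)\<close>
definition kl_div :: "'a measure \<Rightarrow> 'a measure \<Rightarrow> ereal" where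
  "kl_div P Q =
     (if absolutely_continuous Q P then
        (if integrable P (\<lambda>x. ln (enn2real (RN_deriv Q P x)))
         then ereal (\<integral>x. ln (enn2real (RN_deriv Q P x)) \<partial>P)
         else \<infinity>)
      else \<infinity>)"

text \<open>D^*(v,Q) = inf { D(P||Q) : P in the class, V(P,Q) >= v }  (inf of empty set = +infinity).\<close>
definition D_star :: "'a measure \<Rightarrow> real \<Rightarrow> 'a measure \<Rightarrow> ereal" where
  "D_star \<mu> v Q = Inf {kl_div P Q | P. P \<in> prob_set \<mu> \<and> tv_dist \<mu> P Q \<ge> v}"

definition xlogxy :: "real \<Rightarrow> real \<Rightarrow> ereal" where
  "xlogxy a b = (if a = 0 then 0 else if b = 0 then \<infinity> else ereal (a * ln (a / b)))"

definition KL2 :: "real \<Rightarrow> real \<Rightarrow> ereal" where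
  "KL2 p q = xlogxy p q + xlogxy (1 - p) (1 - q)"

text \<open>The measurable spaces range over sigma-algebras on
  the real line, and V is computed w.r.t. any sigma-finite measure dominating P and Q
  (V does not depend on the choice).\<close>
definition vajda_L :: "real \<Rightarrow> ereal" where
  "vajda_L v = Inf {kl_div P Q | (\<nu>::real measure) P Q.
      sigma_finite_measure \<nu> \<and> P \<in> prob_set \<nu> \<and> Q \<in> prob_set \<nu> \<and> tv_dist \<nu> P Q = v}"

definition range_meas :: "'a measure \<Rightarrow> real set" where
  "range_meas Q = {measure Q A | A. A \<in> sets Q}"

definition balance_coeff :: "'a measure \<Rightarrow> real" where
  "balance_coeff Q = Inf {x \<in> range_meas Q. x \<ge> 1/2}"

end

theory Submission
  imports Defs
begin

lemma step_int:
  assumes "prob_space Q" "A \<in> sets Q"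
  shows "integrable Q (\<lambda>x. if x \<in> A then \<alpha> else (\<beta>::real))"
    "(\<integral>x. (if x \<in> A then \<alpha> else \<beta>) \<partial>Q) = \<alpha> * measure Q A + \<beta> * (1 - measure Q A)"
proof -
  interpret prob_space Q by fact
  have eq: "(\<lambda>x. if x \<in> A then \<alpha> else \<beta>) = (\<lambda>x. \<beta> + (\<alpha> - \<beta>) * indicator A x)"
    by (auto simp: indicator_def fun_eq_iff)
  have ii: "integrable Q (indicator A :: _ \<Rightarrow> real)" using assms(2) by (simp add: emeasure_finite less_top[symmetric])
  show "integrable Q (\<lambda>x. if x \<in> A then \<alpha> else (\<beta>::real))" unfolding eq using ii by auto
  have "A \<inter> space Q = A" using assms(2) sets.sets_into_space by auto
  then show "(\<integral>x. (if x \<in> A then \<alpha> else \<beta>) \<partial>Q) = \<alpha> * measure Q A + \<beta> * (1 - measure Q A)"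
    unfolding eq using ii by (simp add: algebra_simps prob_space)
qed

lemma lower_piece:
  fixes P Q :: "'a measure" and B and c :: real
  defines "f \<equiv> \<lambda>x. enn2real (RN_deriv Q P x)"
  assumes Q: "prob_space Q" and P: "prob_space P" and ac: "absolutely_continuous Q P"
    and sets: "sets P = sets Q" and B: "B \<in> sets Q" and c: "0 < c"
    and int: "integrable P (\<lambda>x. ln (f x))"
  shows "measure P B * (ln c + 1) - c * measure Q B \<le> (\<integral>x. indicator B x * ln (f x) \<partial>P)"
proof -
  interpret Q: prob_space Q by fact
  interpret P: prob_space P by fact
  have sfP: "sigma_finite_measure P" by (rule prob_space_imp_sigma_finite[OF P])
  note [measurable_cong] = sets
  have fm[measurable]: "f \<in> borel_measurable Q" unfolding f_def by measurable
  have fmP[measurable]: "f \<in> borel_measurable P" using fm by (simp add: measurable_cong_sets[OF sets refl])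
  have Bp[measurable]: "B \<in> sets P" using B sets by simp
  obtain D where D: "D \<in> borel_measurable Q" "AE x in Q. RN_deriv Q P x = ennreal (D x)"
      "AE x in P. 0 < D x" "\<And>x. 0 \<le> D x"
    using Q.real_RN_deriv[OF P.finite_measure_axioms ac sets] by blast
  have "AE x in P. RN_deriv Q P x = ennreal (D x)"
    using absolutely_continuous_AE[OF sets ac D(2)] .
  then have fpos: "AE x in P. 0 < f x"
    using D(3) unfolding f_def by eventually_elim (auto simp: D(4))
  have i1: "integrable Q (\<lambda>x. f x * (indicator B x / f x))"
    by (rule Q.integrable_const_bound[where B=1]) (auto simp: indicator_def f_def)
  have i2: "integrable P (\<lambda>x. indicator B x / f x)"
    using Q.RN_deriv_integrable[OF sfP ac sets, of "\<lambda>x. indicator B x / f x"] i1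
    unfolding f_def by simp
  have e2: "(\<integral>x. indicator B x / f x \<partial>P) = (\<integral>x. f x * (indicator B x / f x) \<partial>Q)"
    using Q.RN_deriv_integral[OF sfP ac sets, of "\<lambda>x. indicator B x / f x"]
    unfolding f_def by simp
  also have "\<dots> \<le> (\<integral>x. indicator B x \<partial>Q)"
    apply (rule integral_mono[OF i1])
     apply (simp add: Q.emeasure_finite less_top[symmetric] B)
    by (auto simp: indicator_def f_def)
  also have "\<dots> = measure Q B" using B sets.sets_into_space[OF B] by (simp add: Int_absorb2)
  finally have le1: "(\<integral>x. indicator B x / f x \<partial>P) \<le> measure Q B" .
  have iB: "integrable P (indicator B :: _ \<Rightarrow> real)"
    using Bp by (simp add: P.emeasure_finite less_top[symmetric])
  have i3: "integrable P (\<lambda>x. indicator B x * (ln c + 1) - c * (indicator B x / f x))"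
    apply (intro Bochner_Integration.integrable_diff)
    using iB i2 by (simp_all del: times_divide_eq_right)
  have i4: "integrable P (\<lambda>x. indicator B x * ln (f x))"
    using integrable_mult_indicator[OF Bp int] by simp
  have "(\<integral>x. indicator B x * (ln c + 1) - c * (indicator B x / f x) \<partial>P)
      \<le> (\<integral>x. indicator B x * ln (f x) \<partial>P)"
  proof (rule integral_mono_AE[OF i3 i4])
    show "AE x in P. indicator B x * (ln c + 1) - c * (indicator B x / f x) \<le> indicator B x * ln (f x)"
      using fpos
    proof eventually_elim
      case (elim x)
      have "ln (c / f x) \<le> c / f x - 1" using elim c by (intro ln_le_minus_one) auto
      then have "ln c + 1 - c / f x \<le> ln (f x)" using elim c by (simp add: ln_div)
      then show ?case by (auto simp: indicator_def)
    qed
  qed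
  moreover have "(\<integral>x. indicator B x * (ln c + 1) - c * (indicator B x / f x) \<partial>P)
      = measure P B * (ln c + 1) - c * (\<integral>x. indicator B x / f x \<partial>P)"
  proof -
    have iB': "integrable P (\<lambda>x. indicator B x * (ln c + 1))" using iB by simp
    have i2': "integrable P (\<lambda>x. c * (indicator B x / f x))" using i2 by (simp del: times_divide_eq_right)
    have "(\<integral>x. indicator B x * (ln c + 1) - c * (indicator B x / f x) \<partial>P)
      = (\<integral>x. indicator B x * (ln c + 1) \<partial>P) - (\<integral>x. c * (indicator B x / f x) \<partial>P)"
      by (rule Bochner_Integration.integral_diff[OF iB' i2'])
    also have "\<dots> = measure P B * (ln c + 1) - c * (\<integral>x. indicator B x / f x \<partial>P)"
      using sets.sets_into_space[OF Bp] by (simp add: Int_absorb2 del: times_divide_eq_right)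
    finally show ?thesis .
  qed
  ultimately show ?thesis using le1 c
    by (smt (verit, best) mult_left_mono)
qed

lemma null_piece:
  assumes "prob_space P" "B \<in> sets P" "measure P B = 0"
  shows "(\<integral>x. indicator B x * (g x::real) \<partial>P) = 0"
proof -
  interpret P: prob_space P by fact
  have "B \<in> null_sets P" using assms by (simp add: P.emeasure_eq_measure null_sets_def)
  then have "AE x in P. x \<notin> B" by (rule AE_not_in)
  then have "AE x in P. indicator B x * g x = 0" by eventually_elim simp
  then show ?thesis by (rule integral_eq_zero_AE)
qed

lemma binary_bound:
  fixes P Q :: "'a measure" and A and a' :: real
  defines "f \<equiv> \<lambda>x. enn2real (RN_deriv Q P x)"
  assumes Q: "prob_space Q" and P: "prob_space P" and ac: "absolutely_continuous Q P"
    and sets: "sets P = sets Q" and A: "A \<in> sets Q"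
    and int: "integrable P (\<lambda>x. ln (f x))"
    and b0: "0 < measure Q A" and b1: "measure Q A < 1"
    and a1: "measure Q A \<le> a'" and a2: "a' \<le> measure P A"
  shows "a' * ln (a' / measure Q A) + (1 - a') * ln ((1 - a') / (1 - measure Q A))
         \<le> (\<integral>x. ln (f x) \<partial>P)"
proof -
  interpret Q: prob_space Q by fact
  interpret P: prob_space P by fact
  define a where "a = measure P A"
  define b where "b = measure Q A"
  define Ac where "Ac = space Q - A"
  have sp: "space P = space Q" using sets by (rule sets_eq_imp_space_eq)
  have AcQ: "Ac \<in> sets Q" unfolding Ac_def using A by auto
  have ApP: "A \<in> sets P" "Ac \<in> sets P" using A AcQ sets by auto
  have mQ: "measure Q Ac = 1 - b" unfolding Ac_def b_def using Q.prob_compl[OF A] by simp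
  have mP: "measure P Ac = 1 - a" unfolding Ac_def a_def sp[symmetric] using P.prob_compl[OF ApP(1)] by simp
  have a_le: "a \<le> 1" unfolding a_def by simp
  have iA: "integrable P (\<lambda>x. indicator A x * ln (f x))"
    using integrable_mult_indicator[OF ApP(1) int] by simp
  have iAc: "integrable P (\<lambda>x. indicator Ac x * ln (f x))"
    using integrable_mult_indicator[OF ApP(2) int] by simp
  have "(\<integral>x. ln (f x) \<partial>P) = (\<integral>x. indicator A x * ln (f x) + indicator Ac x * ln (f x) \<partial>P)"
    by (rule Bochner_Integration.integral_cong) (auto simp: Ac_def sp indicator_def)
  also have "\<dots> = (\<integral>x. indicator A x * ln (f x) \<partial>P) + (\<integral>x. indicator Ac x * ln (f x) \<partial>P)"
    by (rule Bochner_Integration.integral_add[OF iA iAc])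
  finally have split: "(\<integral>x. ln (f x) \<partial>P) = (\<integral>x. indicator A x * ln (f x) \<partial>P) + (\<integral>x. indicator Ac x * ln (f x) \<partial>P)" .
  have bpos: "0 < b" "b < 1" using b0 b1 by (auto simp: b_def)
  show ?thesis
  proof (cases "a' < 1")
    case True
    define c1 where "c1 = a' / b"
    define c2 where "c2 = (1 - a') / (1 - b)"
    have c1: "0 < c1" "1 \<le> c1" using bpos a1 by (auto simp: c1_def b_def field_simps)
    have c2: "0 < c2" "c2 \<le> 1" using bpos a1 True by (auto simp: c2_def b_def field_simps)
    have l1: "measure P A * (ln c1 + 1) - c1 * measure Q A \<le> (\<integral>x. indicator A x * ln (f x) \<partial>P)"
      unfolding f_def by (rule lower_piece[OF Q P ac sets A c1(1)]) (use int in \<open>simp add: f_def\<close>)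
    have l2: "measure P Ac * (ln c2 + 1) - c2 * measure Q Ac \<le> (\<integral>x. indicator Ac x * ln (f x) \<partial>P)"
      unfolding f_def by (rule lower_piece[OF Q P ac sets AcQ c2(1)]) (use int in \<open>simp add: f_def\<close>)
    have L1: "0 \<le> ln c1" using c1 by simp
    have L2: "ln c2 \<le> 0" using c2 by simp
    have e1: "c1 * b = a'" using bpos by (simp add: c1_def)
    have e2: "c2 * (1 - b) = 1 - a'" using bpos by (simp add: c2_def)
    have m1: "0 \<le> (a - a') * ln c1" using L1 a2 by (simp add: a_def)
    have m2: "(a - a') * ln c2 \<le> 0" using L2 a2 by (simp add: a_def mult_nonneg_nonpos)
    have "a' * ln c1 + (1 - a') * ln c2 \<le> (\<integral>x. ln (f x) \<partial>P)"
      using l1 l2 split mQ mP e1 e2 m1 m2 unfolding a_def[symmetric] b_def[symmetric]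
      by (simp add: algebra_simps)
    then show ?thesis by (simp add: c1_def c2_def b_def)
  next
    case False
    have "measure P A \<le> 1" by simp
    then have a'1: "a' = 1" "a = 1" using a2 False unfolding a_def by linarith+
    define c1 where "c1 = 1 / b"
    have c1: "0 < c1" using bpos by (simp add: c1_def)
    have l1: "measure P A * (ln c1 + 1) - c1 * measure Q A \<le> (\<integral>x. indicator A x * ln (f x) \<partial>P)"
      unfolding f_def by (rule lower_piece[OF Q P ac sets A c1(1)]) (use int in \<open>simp add: f_def\<close>)
    have z: "(\<integral>x. indicator Ac x * ln (f x) \<partial>P) = 0"
      by (rule null_piece[OF P ApP(2)]) (simp add: mP a'1)
    have "ln c1 \<le> (\<integral>x. ln (f x) \<partial>P)"
      using l1 z split a'1 bpos unfolding a_def[symmetric] b_def[symmetric] by (simp add: c1_def)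
    then show ?thesis using a'1 by (simp add: c1_def b_def)
  qed
qed

lemma prob_setD:
  assumes "P \<in> prob_set \<mu>"
  shows "prob_space P" "sets P = sets \<mu>" "absolutely_continuous \<mu> P"
  using assms by (auto simp: prob_set_def)

lemma tv_set:
  fixes \<mu> P Q :: "'a measure"
  defines "p \<equiv> \<lambda>x. enn2real (RN_deriv \<mu> P x)"
  defines "q \<equiv> \<lambda>x. enn2real (RN_deriv \<mu> Q x)"
  assumes mu: "sigma_finite_measure \<mu>" and P: "P \<in> prob_set \<mu>" and Q: "Q \<in> prob_set \<mu>"
  shows "{x \<in> space \<mu>. q x < p x} \<in> sets \<mu>"
    "tv_dist \<mu> P Q = 2 * (measure P {x \<in> space \<mu>. q x < p x} - measure Q {x \<in> space \<mu>. q x < p x})"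
proof -
  interpret sigma_finite_measure \<mu> by fact
  note P' = prob_setD[OF P] and Q' = prob_setD[OF Q]
  interpret P: prob_space P by (rule P'(1))
  interpret Q: prob_space Q by (rule Q'(1))
  have sfP: "sigma_finite_measure P" by (rule prob_space_imp_sigma_finite[OF P'(1)])
  have sfQ: "sigma_finite_measure Q" by (rule prob_space_imp_sigma_finite[OF Q'(1)])
  define A where "A = {x \<in> space \<mu>. q x < p x}"
  have pm[measurable]: "p \<in> borel_measurable \<mu>" "q \<in> borel_measurable \<mu>" unfolding p_def q_def by measurable
  show Am: "{x \<in> space \<mu>. q x < p x} \<in> sets \<mu>" by measurable
  then have Am': "A \<in> sets \<mu>" by (simp add: A_def)
  have ip: "integrable \<mu> p"
    using RN_deriv_integrable[OF sfP P'(3) P'(2), of "\<lambda>_. 1"] by (simp add: p_def P.prob_space)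
  have iq: "integrable \<mu> q"
    using RN_deriv_integrable[OF sfQ Q'(3) Q'(2), of "\<lambda>_. 1"] by (simp add: q_def Q.prob_space)
  have p1: "(\<integral>x. p x \<partial>\<mu>) = 1"
    using RN_deriv_integral[OF sfP P'(3) P'(2), of "\<lambda>_. 1"] by (simp add: p_def P.prob_space)
  have q1: "(\<integral>x. q x \<partial>\<mu>) = 1"
    using RN_deriv_integral[OF sfQ Q'(3) Q'(2), of "\<lambda>_. 1"] by (simp add: q_def Q.prob_space)
  have AP: "A \<in> sets P" "A \<in> sets Q" using Am' P'(2) Q'(2) by auto
  have pA: "measure P A = (\<integral>x. p x * indicator A x \<partial>\<mu>)"
    using RN_deriv_integral[OF sfP P'(3) P'(2), of "indicator A"] Am' AP sets.sets_into_space[OF AP(1)]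
    by (simp add: p_def Int_absorb2)
  have qA: "measure Q A = (\<integral>x. q x * indicator A x \<partial>\<mu>)"
    using RN_deriv_integral[OF sfQ Q'(3) Q'(2), of "indicator A"] Am' AP sets.sets_into_space[OF AP(2)]
    by (simp add: q_def Int_absorb2)
  have ipA: "integrable \<mu> (\<lambda>x. p x * indicator A x)"
    using integrable_mult_indicator[OF Am' ip] by (simp add: mult.commute)
  have iqA: "integrable \<mu> (\<lambda>x. q x * indicator A x)"
    using integrable_mult_indicator[OF Am' iq] by (simp add: mult.commute)
  have "tv_dist \<mu> P Q = (\<integral>x. \<bar>p x - q x\<bar> \<partial>\<mu>)" by (simp add: tv_dist_def p_def q_def)
  also have "\<dots> = (\<integral>x. 2 * (p x * indicator A x - q x * indicator A x) - (p x - q x) \<partial>\<mu>)"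
    by (rule Bochner_Integration.integral_cong) (auto simp: A_def indicator_def)
  also have "\<dots> = 2 * ((\<integral>x. p x * indicator A x \<partial>\<mu>) - (\<integral>x. q x * indicator A x \<partial>\<mu>)) - ((\<integral>x. p x \<partial>\<mu>) - (\<integral>x. q x \<partial>\<mu>))"
    using ipA iqA ip iq by simp
  also have "\<dots> = 2 * (measure P A - measure Q A)" using pA qA p1 q1 by simp
  finally show "tv_dist \<mu> P Q = 2 * (measure P {x \<in> space \<mu>. q x < p x} - measure Q {x \<in> space \<mu>. q x < p x})"
    by (simp add: A_def)
qed

lemma witness:
  fixes a' b :: real
  assumes b0: "0 < b" and b1: "b < 1" and ab: "b < a'" and a1: "a' \<le> 1"
  shows "vajda_L (2 * (a' - b)) \<le> ereal (a' * ln (a' / b) + (1 - a') * ln ((1 - a') / (1 - b)))"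
proof -
  define M0 where "M0 = count_space {0::real, 1}"
  define pr where "pr = (\<lambda>x::real. if x = 0 then a' else 1 - a')"
  define qr where "qr = (\<lambda>x::real. if x = 0 then b else 1 - b)"
  define rr where "rr = (\<lambda>x::real. if x = 0 then a' / b else (1 - a') / (1 - b))"
  define P' where "P' = density M0 (\<lambda>x. ennreal (pr x))"
  define Q' where "Q' = density M0 (\<lambda>x. ennreal (qr x))"
  have sf: "sigma_finite_measure M0" unfolding M0_def by (rule sigma_finite_measure_count_space_finite) simp
  have spM0: "space M0 = {0,1}" by (simp add: M0_def)
  have meas: "\<And>g::real \<Rightarrow> 'b::topological_space. g \<in> borel_measurable M0" by (simp add: M0_def)
  have measE: "\<And>g::real \<Rightarrow> ennreal. g \<in> borel_measurable M0" by (simp add: M0_def)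
  have prnn: "\<And>x. 0 \<le> pr x" and qrnn: "\<And>x. 0 \<le> qr x" using assms by (auto simp: pr_def qr_def)
  have pdens: "prob_space (density M0 (\<lambda>x. ennreal (h x)))" if "h 0 + h 1 = 1" "\<And>x. 0 \<le> h x" for h :: "real \<Rightarrow> real"
  proof
    have "emeasure (density M0 (\<lambda>x. ennreal (h x))) (space (density M0 (\<lambda>x. ennreal (h x))))
        = (\<integral>\<^sup>+ x. ennreal (h x) * indicator {0,1} x \<partial>M0)"
      by (subst emeasure_density) (auto simp: M0_def)
    also have "\<dots> = ennreal (h 0) + ennreal (h 1)"
      by (simp add: M0_def nn_integral_count_space_finite)
    also have "\<dots> = 1" using that by (simp flip: ennreal_plus)
    finally show "emeasure (density M0 (\<lambda>x. ennreal (h x))) (space (density M0 (\<lambda>x. ennreal (h x)))) = 1" .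
  qed
  have PP: "P' \<in> prob_set M0" unfolding prob_set_def P'_def
    using pdens[of pr] prnn by (auto simp: pr_def M0_def intro: absolutely_continuousI_count_space)
  have QQ: "Q' \<in> prob_set M0" unfolding prob_set_def Q'_def
    using pdens[of qr] qrnn by (auto simp: qr_def M0_def intro: absolutely_continuousI_count_space)
  have RNP: "\<And>x. x \<in> {0,1} \<Longrightarrow> RN_deriv M0 P' x = ennreal (pr x)"
  proof -
    have "AE x in M0. ennreal (pr x) = RN_deriv M0 P' x"
      by (rule sigma_finite_measure.RN_deriv_unique[OF sf measE]) (simp add: P'_def)
    then have "\<forall>x\<in>{0,1}. ennreal (pr x) = RN_deriv M0 P' x" unfolding M0_def AE_count_space .
    then show "\<And>x. x \<in> {0,1} \<Longrightarrow> RN_deriv M0 P' x = ennreal (pr x)" by auto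
  qed
  have RNQ: "\<And>x. x \<in> {0,1} \<Longrightarrow> RN_deriv M0 Q' x = ennreal (qr x)"
  proof -
    have "AE x in M0. ennreal (qr x) = RN_deriv M0 Q' x"
      by (rule sigma_finite_measure.RN_deriv_unique[OF sf measE]) (simp add: Q'_def)
    then have "\<forall>x\<in>{0,1}. ennreal (qr x) = RN_deriv M0 Q' x" unfolding M0_def AE_count_space .
    then show "\<And>x. x \<in> {0,1} \<Longrightarrow> RN_deriv M0 Q' x = ennreal (qr x)" by auto
  qed
  have tv: "tv_dist M0 P' Q' = 2 * (a' - b)"
  proof -
    have "tv_dist M0 P' Q' = (\<integral>x. \<bar>pr x - qr x\<bar> \<partial>M0)"
      unfolding tv_dist_def
      by (rule Bochner_Integration.integral_cong) (auto simp: spM0 RNP RNQ prnn qrnn)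
    also have "\<dots> = 2 * (a' - b)" using ab by (simp add: M0_def lebesgue_integral_count_space_finite pr_def qr_def)
    finally show ?thesis .
  qed
  have Q'prob: "prob_space Q'" using QQ by (simp add: prob_set_def)
  have setsQ': "sets Q' = sets M0" by (simp add: Q'_def)
  have setsP': "sets P' = sets M0" by (simp add: P'_def)
  have P'eq: "P' = density Q' (\<lambda>x. ennreal (rr x))"
  proof -
    have "density Q' (\<lambda>x. ennreal (rr x)) = density M0 (\<lambda>x. ennreal (qr x) * ennreal (rr x))"
      unfolding Q'_def by (rule density_density_eq) (simp_all add: measE)
    also have "\<dots> = P'"
      unfolding P'_def
      apply (rule density_cong[OF measE measE])
      using assms by (auto simp: M0_def AE_count_space qr_def rr_def pr_def simp flip: ennreal_mult)
    finally show ?thesis by simp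
  qed
  have measQ': "\<And>g::real \<Rightarrow> ennreal. g \<in> borel_measurable Q'" using measE by (simp add: measurable_cong_sets[OF setsQ' refl])
  have acQP: "absolutely_continuous Q' P'" unfolding P'eq by (rule absolutely_continuousI_density[OF measQ'])
  have RNQP: "\<And>x. x \<in> {0,1} \<Longrightarrow> RN_deriv Q' P' x = ennreal (rr x)"
  proof -
    have sfQ': "sigma_finite_measure Q'" by (rule prob_space_imp_sigma_finite[OF Q'prob])
    have "AE x in Q'. ennreal (rr x) = RN_deriv Q' P' x"
      by (rule sigma_finite_measure.RN_deriv_unique[OF sfQ' measQ']) (simp add: P'eq)
    then have "AE x in M0. 0 < ennreal (qr x) \<longrightarrow> ennreal (rr x) = RN_deriv Q' P' x"
      unfolding Q'_def by (subst (asm) AE_density) (simp_all add: measE)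
    then have "\<forall>x\<in>{0,1}. 0 < ennreal (qr x) \<longrightarrow> ennreal (rr x) = RN_deriv Q' P' x"
      unfolding M0_def AE_count_space .
    then show "\<And>x. x \<in> {0,1} \<Longrightarrow> RN_deriv Q' P' x = ennreal (rr x)"
      using assms by (auto simp: qr_def)
  qed
  have rrnn: "\<And>x. 0 \<le> rr x" using assms by (auto simp: rr_def)
  have spP': "space P' = {0,1}" by (simp add: P'_def M0_def)
  have measR: "\<And>g::real \<Rightarrow> real. g \<in> borel_measurable M0" by (simp add: M0_def)
  have "integrable P' (\<lambda>x. ln (enn2real (RN_deriv Q' P' x))) \<longleftrightarrow> integrable P' (\<lambda>x. ln (rr x))"
    by (rule Bochner_Integration.integrable_cong) (auto simp: spP' RNQP rrnn)
  also have "\<dots> \<longleftrightarrow> integrable M0 (\<lambda>x. pr x * ln (rr x))"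
    unfolding P'_def by (rule integrable_real_density) (auto simp: measR prnn)
  finally have int: "integrable P' (\<lambda>x. ln (enn2real (RN_deriv Q' P' x)))"
    by (simp add: M0_def integrable_count_space)
  have "(\<integral>x. ln (enn2real (RN_deriv Q' P' x)) \<partial>P') = (\<integral>x. ln (rr x) \<partial>P')"
    by (rule Bochner_Integration.integral_cong) (auto simp: spP' RNQP rrnn)
  also have "\<dots> = (\<integral>x. pr x * ln (rr x) \<partial>M0)"
    unfolding P'_def by (rule integral_real_density) (auto simp: measR prnn)
  also have "\<dots> = a' * ln (a' / b) + (1 - a') * ln ((1 - a') / (1 - b))"
    by (simp add: M0_def lebesgue_integral_count_space_finite pr_def rr_def)
  finally have kl: "kl_div P' Q' = ereal (a' * ln (a' / b) + (1 - a') * ln ((1 - a') / (1 - b)))"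
    using int acQP by (simp add: kl_div_def)
  show ?thesis unfolding vajda_L_def
    by (rule Inf_lower) (use sf PP QQ tv kl in \<open>auto simp flip: kl\<close>)
qed

definition kf :: "real \<Rightarrow> real \<Rightarrow> real" where
  "kf v s = (s - v/2) * ln ((s - v/2) / s) + (1 - (s - v/2)) * ln ((1 - (s - v/2)) / (1 - s))"

lemma upper_one:
  fixes \<mu> Q :: "'a measure" and A and v :: real
  assumes mu: "sigma_finite_measure \<mu>" and Q: "Q \<in> prob_set \<mu>" and v: "0 < v" "v < 1"
    and A: "A \<in> sets Q" and s1: "1/2 \<le> measure Q A" and s2: "measure Q A < 1"
  shows "D_star \<mu> v Q \<le> ereal (kf v (measure Q A))"
proof -
  interpret mu: sigma_finite_measure \<mu> by fact
  note Q' = prob_setD[OF Q]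
  interpret Q: prob_space Q by (rule Q'(1))
  have sfQ: "sigma_finite_measure Q" by (rule prob_space_imp_sigma_finite[OF Q'(1)])
  define s where "s = measure Q A"
  define h1 where "h1 = (s - v/2) / s"
  define h2 where "h2 = (1 - (s - v/2)) / (1 - s)"
  define hr where "hr = (\<lambda>x. if x \<in> A then h1 else h2)"
  define P where "P = density Q (\<lambda>x. ennreal (hr x))"
  have sp: "s > 0" "s < 1" "s - v/2 > 0" using s1 s2 v by (auto simp: s_def)
  have h1p: "h1 > 0" and h2p: "h2 > 0" using sp v by (auto simp: h1_def h2_def)
  have hrnn: "\<And>x. 0 \<le> hr x" using h1p h2p by (auto simp: hr_def)
  note [measurable_cong] = Q'(2)
  have Amu[measurable]: "A \<in> sets \<mu>" using A Q'(2) by simp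
  have hrQ[measurable]: "hr \<in> borel_measurable Q" unfolding hr_def using A by measurable
  have hrmu[measurable]: "hr \<in> borel_measurable \<mu>" unfolding hr_def by measurable
  have ihr: "integrable Q hr" unfolding hr_def by (rule step_int(1)[OF Q'(1) A])
  have inthr: "(\<integral>x. hr x \<partial>Q) = 1"
    unfolding hr_def step_int(2)[OF Q'(1) A] s_def[symmetric] using sp by (simp add: h1_def h2_def field_simps)
  have setsP: "sets P = sets Q" by (simp add: P_def)
  have Pprob: "prob_space P"
  proof
    have "emeasure P (space P) = (\<integral>\<^sup>+ x. ennreal (hr x) * indicator (space Q) x \<partial>Q)"
      unfolding P_def by (subst emeasure_density) auto
    also have "\<dots> = (\<integral>\<^sup>+ x. ennreal (hr x) \<partial>Q)"
      by (rule nn_integral_cong) (auto simp: indicator_def)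
    also have "\<dots> = ennreal (\<integral>x. hr x \<partial>Q)"
      by (rule nn_integral_eq_integral[OF ihr]) (simp add: hrnn)
    finally show "emeasure P (space P) = 1" using inthr by simp
  qed
  have sfP: "sigma_finite_measure P" by (rule prob_space_imp_sigma_finite[OF Pprob])
  have acQP: "absolutely_continuous Q P" unfolding P_def by (rule absolutely_continuousI_density) simp
  have acmuP: "absolutely_continuous \<mu> P"
    using Q'(3) acQP Q'(2) unfolding absolutely_continuous_def null_sets_def by auto
  have PP: "P \<in> prob_set \<mu>" using Pprob setsP Q'(2) acmuP by (simp add: prob_set_def)
  have Qd: "Q = density \<mu> (RN_deriv \<mu> Q)" using mu.density_RN_deriv[OF Q'(3) Q'(2)] by simp
  have "P = density \<mu> (\<lambda>x. RN_deriv \<mu> Q x * ennreal (hr x))"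
    unfolding P_def by (subst Qd, rule density_density_eq) auto
  then have "AE x in \<mu>. RN_deriv \<mu> Q x * ennreal (hr x) = RN_deriv \<mu> P x"
    by (intro mu.RN_deriv_unique) auto
  then have aep: "AE x in \<mu>. enn2real (RN_deriv \<mu> P x) = enn2real (RN_deriv \<mu> Q x) * hr x"
  proof eventually_elim
    case (elim x)
    then have "enn2real (RN_deriv \<mu> P x) = enn2real (RN_deriv \<mu> Q x * ennreal (hr x))" by simp
    also have "\<dots> = enn2real (RN_deriv \<mu> Q x) * hr x" by (simp add: enn2real_mult hrnn)
    finally show ?case .
  qed
  have "tv_dist \<mu> P Q = (\<integral>x. enn2real (RN_deriv \<mu> Q x) * \<bar>hr x - 1\<bar> \<partial>\<mu>)"
    unfolding tv_dist_def
  proof (rule integral_cong_AE)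
    show "AE x in \<mu>. \<bar>enn2real (RN_deriv \<mu> P x) - enn2real (RN_deriv \<mu> Q x)\<bar> =
        enn2real (RN_deriv \<mu> Q x) * \<bar>hr x - 1\<bar>"
      using aep
    proof eventually_elim
      case (elim x)
      define a where "a = enn2real (RN_deriv \<mu> Q x)"
      have "a \<ge> 0" by (simp add: a_def)
      have "\<bar>a * hr x - a\<bar> = \<bar>a * (hr x - 1)\<bar>" by (simp add: algebra_simps)
      also have "\<dots> = a * \<bar>hr x - 1\<bar>" using \<open>a \<ge> 0\<close> by (simp add: abs_mult)
      finally show ?case using elim by (simp add: a_def)
    qed
  qed auto
  also have "\<dots> = (\<integral>x. \<bar>hr x - 1\<bar> \<partial>Q)"
    by (rule mu.RN_deriv_integral[OF sfQ Q'(3) Q'(2), symmetric]) auto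
  also have "\<dots> = (\<integral>x. (if x \<in> A then \<bar>h1 - 1\<bar> else \<bar>h2 - 1\<bar>) \<partial>Q)"
    by (rule Bochner_Integration.integral_cong) (auto simp: hr_def)
  also have "\<dots> = v"
    unfolding step_int(2)[OF Q'(1) A] s_def[symmetric] using sp v
    by (simp add: h1_def h2_def field_simps abs_if)
  finally have tv: "tv_dist \<mu> P Q = v" .
  have "AE x in Q. ennreal (hr x) = RN_deriv Q P x"
    by (rule sigma_finite_measure.RN_deriv_unique[OF sfQ]) (auto simp: P_def)
  then have aef: "AE x in Q. enn2real (RN_deriv Q P x) * ln (enn2real (RN_deriv Q P x)) = hr x * ln (hr x)"
    by eventually_elim (metis enn2real_ennreal hrnn)
  have ihl: "integrable Q (\<lambda>x. hr x * ln (hr x))"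
  proof -
    have "integrable Q (\<lambda>x. if x \<in> A then h1 * ln h1 else h2 * ln h2)" by (rule step_int(1)[OF Q'(1) A])
    then show ?thesis by (rule Bochner_Integration.integrable_cong[THEN iffD1, rotated 2]) (auto simp: hr_def)
  qed
  have inthl: "(\<integral>x. hr x * ln (hr x) \<partial>Q) = s * (h1 * ln h1) + (1 - s) * (h2 * ln h2)"
  proof -
    have "(\<integral>x. hr x * ln (hr x) \<partial>Q) = (\<integral>x. (if x \<in> A then h1 * ln h1 else h2 * ln h2) \<partial>Q)"
      by (rule Bochner_Integration.integral_cong) (auto simp: hr_def)
    then show ?thesis unfolding step_int(2)[OF Q'(1) A] s_def by simp
  qed
  have int: "integrable P (\<lambda>x. ln (enn2real (RN_deriv Q P x)))"
    apply (subst sigma_finite_measure.RN_deriv_integrable[OF sfQ sfP acQP setsP])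
     apply simp
    using integrable_cong_AE[of _ Q, THEN iffD2, OF _ _ aef ihl] by simp
  have "(\<integral>x. ln (enn2real (RN_deriv Q P x)) \<partial>P) = (\<integral>x. enn2real (RN_deriv Q P x) * ln (enn2real (RN_deriv Q P x)) \<partial>Q)"
    by (rule sigma_finite_measure.RN_deriv_integral[OF sfQ sfP acQP setsP]) simp
  also have "\<dots> = (\<integral>x. hr x * ln (hr x) \<partial>Q)"
    by (rule integral_cong_AE[OF _ _ aef]) auto
  also have "\<dots> = kf v s"
    unfolding inthl kf_def using sp by (simp add: h1_def h2_def)
  finally have kl: "kl_div P Q = ereal (kf v s)" using int acQP by (simp add: kl_div_def)
  have "D_star \<mu> v Q \<le> kl_div P Q"
    unfolding D_star_def by (rule Inf_lower) (use PP tv in auto)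
  then show ?thesis using kl by (simp add: s_def)
qed

lemma lower_part:
  fixes \<mu> Q :: "'a measure" and v :: real
  assumes mu: "sigma_finite_measure \<mu>" and Q: "Q \<in> prob_set \<mu>" and v: "0 < v" "v < 1"
  shows "vajda_L v \<le> D_star \<mu> v Q"
  unfolding D_star_def
proof (rule Inf_greatest, clarify)
  fix P assume P: "P \<in> prob_set \<mu>" and tvv: "v \<le> tv_dist \<mu> P Q"
  show "vajda_L v \<le> kl_div P Q"
  proof (cases "absolutely_continuous Q P \<and> integrable P (\<lambda>x. ln (enn2real (RN_deriv Q P x)))")
    case False
    then show ?thesis by (auto simp: kl_div_def)
  next
    case True
    then have ac: "absolutely_continuous Q P" and int: "integrable P (\<lambda>x. ln (enn2real (RN_deriv Q P x)))" by auto
    note P' = prob_setD[OF P] and Q' = prob_setD[OF Q]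
    interpret P: prob_space P by (rule P'(1))
    interpret Q: prob_space Q by (rule Q'(1))
    define A where "A = {x \<in> space \<mu>. enn2real (RN_deriv \<mu> Q x) < enn2real (RN_deriv \<mu> P x)}"
    have Am: "A \<in> sets \<mu>" and tv: "tv_dist \<mu> P Q = 2 * (measure P A - measure Q A)"
      using tv_set[OF mu P Q] by (simp_all add: A_def)
    have AQ: "A \<in> sets Q" and AP: "A \<in> sets P" using Am P'(2) Q'(2) by auto
    define a where "a = measure P A"
    define b where "b = measure Q A"
    have ab: "v / 2 \<le> a - b" using tv tvv by (simp add: a_def b_def)
    have a1: "a \<le> 1" by (simp add: a_def)
    have b0: "0 < b"
    proof (rule ccontr)
      assume "\<not> 0 < b"
      then have "b = 0" using measure_nonneg[of Q A] by (simp add: b_def)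
      then have "emeasure Q A = 0" by (simp add: b_def Q.emeasure_eq_measure)
      then have "emeasure P A = 0" using absolutely_continuousD[OF ac AQ] by simp
      then have "a = 0" by (simp add: a_def P.emeasure_eq_measure)
      then show False using ab \<open>b = 0\<close> v by simp
    qed
    have b1: "b < 1" using ab a1 v by simp
    define a' where "a' = b + v / 2"
    have "vajda_L (2 * (a' - b)) \<le> ereal (a' * ln (a' / b) + (1 - a') * ln ((1 - a') / (1 - b)))"
      by (rule witness) (use b0 b1 v ab a1 in \<open>auto simp: a'_def\<close>)
    also have "\<dots> \<le> ereal (\<integral>x. ln (enn2real (RN_deriv Q P x)) \<partial>P)"
      unfolding ereal_less_eq b_def
      by (rule binary_bound[OF Q'(1) P'(1) ac _ AQ int]) (use P'(2) Q'(2) b0 b1 ab v in \<open>auto simp: a_def b_def a'_def\<close>)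
    also have "\<dots> = kl_div P Q" using True by (simp add: kl_div_def)
    finally show ?thesis by (simp add: a'_def)
  qed
qed

theorem theorem1:
  fixes \<mu> Q :: "'a measure" and v :: real
  assumes "sigma_finite_measure \<mu>"
    and "Q \<in> prob_set \<mu>"
    and "0 < v" and "v < 1"
  shows "vajda_L v \<le> D_star \<mu> v Q
         \<and> D_star \<mu> v Q \<le> KL2 (balance_coeff Q - v / 2) (balance_coeff Q)"
proof
  show "vajda_L v \<le> D_star \<mu> v Q" by (rule lower_part[OF assms])
next
  note Q' = prob_setD[OF assms(2)]
  interpret Q: prob_space Q by (rule Q'(1))
  define S where "S = {x \<in> range_meas Q. x \<ge> 1/2}"
  define \<beta> where "\<beta> = balance_coeff Q"
  have bS: "\<beta> = Inf S" by (simp add: \<beta>_def balance_coeff_def S_def)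
  have oneS: "1 \<in> S" unfolding S_def range_meas_def
    by (auto intro!: exI[of _ "space Q"] simp: Q.prob_space)
  have Sne: "S \<noteq> {}" using oneS by auto
  have bdd: "bdd_below S" unfolding S_def by (rule bdd_belowI[of _ "1/2"]) auto
  have Sge: "\<And>x. x \<in> S \<Longrightarrow> \<beta> \<le> x" unfolding bS by (rule cInf_lower[OF _ bdd])
  have b_ge: "1/2 \<le> \<beta>" unfolding bS by (rule cInf_greatest[OF Sne]) (auto simp: S_def)
  have b_le: "\<beta> \<le> 1" using Sge[OF oneS] .
  have key: "D_star \<mu> v Q \<le> ereal (kf v x)" if "x \<in> S" "x < 1" for x
  proof -
    from that obtain A where A: "A \<in> sets Q" "x = measure Q A" "1/2 \<le> x"
      by (auto simp: S_def range_meas_def)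
    show ?thesis using upper_one[OF assms(1,2,3,4) A(1)] A that by simp
  qed
  have "D_star \<mu> v Q \<le> KL2 (\<beta> - v / 2) \<beta>"
  proof (cases "\<beta> = 1")
    case True
    have "KL2 (\<beta> - v / 2) \<beta> = \<infinity>"
      using True assms(3,4) by (simp add: KL2_def xlogxy_def)
    then show ?thesis by simp
  next
    case False
    then have b1: "\<beta> < 1" using b_le by simp
    have KL: "KL2 (\<beta> - v / 2) \<beta> = ereal (kf v \<beta>)"
      using b1 b_ge assms(3,4) by (simp add: KL2_def xlogxy_def kf_def)
    have cont: "isCont (kf v) \<beta>"
      unfolding kf_def using b1 b_ge assms(3,4)
      by (intro continuous_intros) (auto simp: field_simps)
    show ?thesis unfolding KL
    proof (rule ereal_le_epsilon2)
      fix e :: real assume e: "0 < e"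
      from cont[unfolded isCont_def LIM_eq] e obtain d where d: "0 < d"
        and dd: "\<And>x. x \<noteq> \<beta> \<and> norm (x - \<beta>) < d \<longrightarrow> norm (kf v x - kf v \<beta>) < e" by blast
      have "Inf S < \<beta> + min d (1 - \<beta>)" using d b1 bS by simp
      then obtain x where x: "x \<in> S" "x < \<beta> + min d (1 - \<beta>)" using cInf_lessD[OF Sne] by blast
      have xb: "\<beta> \<le> x" using Sge[OF x(1)] .
      have x1: "x < 1" using x(2) by simp
      have "kf v x \<le> kf v \<beta> + e"
      proof (cases "x = \<beta>")
        case True then show ?thesis using e by simp
      next
        case False
        then have "norm (kf v x - kf v \<beta>) < e" using dd[of x] xb x(2) by simp
        then show ?thesis by simp
      qed
      then have "ereal (kf v x) \<le> ereal (kf v \<beta>) + ereal e" by simp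
      with key[OF x(1) x1] show "D_star \<mu> v Q \<le> ereal (kf v \<beta>) + ereal e" by (rule order_trans)
    qed
  qed
  then show "D_star \<mu> v Q \<le> KL2 (balance_coeff Q - v / 2) (balance_coeff Q)" by (simp add: \<beta>_def)
qed

end
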